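(* For every integer $a \ge 3$, every $b \in \mathbb{N}$ and every cycle graph $C_a$ of order $a$, $R_\mathrm{ord}(C_a, P_b^\mathrm{mon}) = 1 + (a-1)(b-1)$.
   Context: All graphs are finite, simple and undirected, and a graph of order $n$ has vertex set $\{0,1,\ldots,n-1\}$; $K_n$ is the complete graph on $\{0,\ldots,n-1\}$. A cycle graph of order $a$ is any graph on $\{0,\ldots,a-1\}$ whose edges form a single Hamiltonian cycle (in any vertex order). A $2$-edge-coloring of $K_n$ assigns each edge a color in $\{1,2\}$. An increasing embedding of $H$ in color $j$ is an injective map $\varphi\colon V(H)\to V(K_n)$ with $\varphi(0)<\cdots<\varphi(|H|-1)$ such that every edge $uv$ of $H$ goes to an edge $\{\varphi(u),\varphi(v)\}$ of color $j$. $R_\mathrm{ord}(H_1,H_2)$ is the smallest $n$ such that every $2$-edge-coloring of $K_n$ admits an increasing embedding of $H_1$ in color $1$ or of $H_2$ in color $2$. The monotone path $P_n^\mathrm{mon}$ has edges $\{i,i+1\}$, $0\le i\le n-2$. *)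

theory Defs
  imports Main
begin

text \<open>A graph of order m is represented by its order m (vertex set {0..<m}) together with
  its edge set, a set of 2-element subsets of {0..<m}.\<close>

definition cycle_graph :: "nat \<Rightarrow> nat set set \<Rightarrow> bool" where
  "cycle_graph a E \<longleftrightarrow>
     (\<exists>\<sigma>. bij_betw \<sigma> {..<a} {..<a} \<and> E = {{\<sigma> i, \<sigma> (Suc i mod a)} | i. i < a})"

definition mon_path_edges :: "nat \<Rightarrow> nat set set" where
  "mon_path_edges n = {{i, Suc i} | i. Suc i < n}"

definition two_coloring :: "nat \<Rightarrow> (nat set \<Rightarrow> nat) \<Rightarrow> bool" where
  "two_coloring n c \<longleftrightarrow> (\<forall>x y. x < n \<longrightarrow> y < n \<longrightarrow> x \<noteq> y \<longrightarrow> c {x, y} \<in> {1, 2})"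

definition incr_embedding ::
    "nat \<Rightarrow> (nat set \<Rightarrow> nat) \<Rightarrow> nat \<Rightarrow> nat \<Rightarrow> nat set set \<Rightarrow> bool" where
  "incr_embedding n c j m E \<longleftrightarrow>
     (\<exists>\<phi>. strict_mono_on {..<m} \<phi> \<and> (\<forall>i<m. \<phi> i < n) \<and>
          (\<forall>u v. {u, v} \<in> E \<longrightarrow> c {\<phi> u, \<phi> v} = j))"

definition ord_arrows :: "nat \<Rightarrow> nat \<Rightarrow> nat set set \<Rightarrow> nat \<Rightarrow> nat set set \<Rightarrow> bool" where
  "ord_arrows n m1 E1 m2 E2 \<longleftrightarrow>
     (\<forall>c. two_coloring n c \<longrightarrow> incr_embedding n c 1 m1 E1 \<or> incr_embedding n c 2 m2 E2)"

definition R_ord :: "nat \<Rightarrow> nat set set \<Rightarrow> nat \<Rightarrow> nat set set \<Rightarrow> nat" where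
  "R_ord m1 E1 m2 E2 = (LEAST n. ord_arrows n m1 E1 m2 E2)"

end

theory Submission
  imports Defs
begin

definition blk_col :: "nat \<Rightarrow> nat set \<Rightarrow> nat" where
  "blk_col d S = (if card ((\<lambda>x. x div d) ` S) = 1 then 1 else 2)"

lemma blk_col_pair: "blk_col d {x,y} = (if x div d = y div d then 1 else 2)"
  by (auto simp: blk_col_def card_insert_if)

lemma div_block_card:
  assumes "(d::nat) > 0"
  shows "card {x. x div d = k} = d"
proof -
  have "{x. x div d = k} = {k*d..<k*d+d}"
  proof (intro set_eqI iffI)
    fix x assume "x \<in> {x. x div d = k}"
    then have "x div d = k" by simp
    moreover have "x = x div d * d + x mod d" by simp
    moreover have "x mod d < d" using assms by simp
    ultimately show "x \<in> {k*d..<k*d+d}" by (metis atLeastLessThan_iff le_add1 nat_add_left_cancel_less)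
  next
    fix x assume "x \<in> {k*d..<k*d+d}"
    then show "x \<in> {x. x div d = k}" using assms
      by (auto intro!: div_nat_eqI simp: mult.commute)
  qed
  then show ?thesis by simp
qed

lemma lower:
  assumes a3: "a \<ge> 3" and b1: "b \<ge> 1" and cg: "cycle_graph a E" and nle: "n \<le> (a-1)*(b-1)"
  shows "\<not> ord_arrows n a E b (mon_path_edges b)"
proof
  assume A: "ord_arrows n a E b (mon_path_edges b)"
  define d where "d = a - 1"
  have d0: "d > 0" using a3 d_def by simp
  define c where "c = blk_col d"
  have tc: "two_coloring n c" by (auto simp: two_coloring_def c_def blk_col_def)
  from A tc have "incr_embedding n c 1 a E \<or> incr_embedding n c 2 b (mon_path_edges b)"
    by (simp add: ord_arrows_def)
  then show False
  proof
    assume "incr_embedding n c 1 a E"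
    then obtain \<phi> where sm: "strict_mono_on {..<a} \<phi>" and col: "\<And>u v. {u,v} \<in> E \<Longrightarrow> c {\<phi> u, \<phi> v} = 1"
      by (auto simp: incr_embedding_def)
    obtain \<sigma> where bij: "bij_betw \<sigma> {..<a} {..<a}" and Ed: "E = {{\<sigma> i, \<sigma> (Suc i mod a)} | i. i < a}"
      using cg by (auto simp: cycle_graph_def)
    define k where "k = \<phi> (\<sigma> 0) div d"
    have same: "i < a \<Longrightarrow> \<phi> (\<sigma> i) div d = k" for i
    proof (induction i)
      case 0 then show ?case by (simp add: k_def)
    next
      case (Suc i)
      have "{\<sigma> i, \<sigma> (Suc i)} \<in> E" unfolding Ed using Suc.prems
        by (intro CollectI exI[of _ i]) simp
      then have "c {\<phi> (\<sigma> i), \<phi> (\<sigma> (Suc i))} = 1" by (rule col)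
      then have "\<phi> (\<sigma> i) div d = \<phi> (\<sigma> (Suc i)) div d"
        by (simp add: c_def blk_col_pair split: if_splits)
      then show ?case using Suc by simp
    qed
    have "\<phi> ` {..<a} \<subseteq> {x. x div d = k}"
    proof
      fix y assume "y \<in> \<phi> ` {..<a}"
      then obtain j where j: "j < a" "y = \<phi> j" by auto
      have "j \<in> \<sigma> ` {..<a}" using bij j by (simp add: bij_betw_def)
      then obtain i where "i < a" "j = \<sigma> i" by auto
      then show "y \<in> {x. x div d = k}" using same j by simp
    qed
    then have "card (\<phi> ` {..<a}) \<le> d"
      using div_block_card[OF d0, of k] card_mono
      by (metis div_block_card d0 finite_subset le_refl card.infinite not_less0 zero_less_iff_neq_zero infinite_super)
    moreover have "card (\<phi> ` {..<a}) = a"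
      using strict_mono_on_imp_inj_on[OF sm] by (simp add: card_image)
    ultimately show False using d_def a3 by simp
  next
    assume "incr_embedding n c 2 b (mon_path_edges b)"
    then obtain \<phi> where sm: "strict_mono_on {..<b} \<phi>" and lt: "\<And>i. i < b \<Longrightarrow> \<phi> i < n"
      and col: "\<And>u v. {u,v} \<in> mon_path_edges b \<Longrightarrow> c {\<phi> u, \<phi> v} = 2"
      by (auto simp: incr_embedding_def)
    have step: "\<phi> i div d < \<phi> (Suc i) div d" if "Suc i < b" for i
    proof -
      have "{i, Suc i} \<in> mon_path_edges b" using that by (auto simp: mon_path_edges_def)
      then have "c {\<phi> i, \<phi> (Suc i)} = 2" by (rule col)
      then have ne: "\<phi> i div d \<noteq> \<phi> (Suc i) div d" by (simp add: c_def blk_col_pair split: if_splits)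
      have "\<phi> i < \<phi> (Suc i)" using sm that by (intro strict_mono_onD[OF sm]) auto
      then have "\<phi> i div d \<le> \<phi> (Suc i) div d" by (simp add: div_le_mono)
      with ne show ?thesis by simp
    qed
    have ge: "i < b \<Longrightarrow> i \<le> \<phi> i div d" for i
    proof (induction i)
      case 0 then show ?case by simp
    next
      case (Suc i) then show ?case using step[of i] by simp
    qed
    have "\<phi> (b-1) < (b-1) * d" using lt[of "b-1"] b1 nle d_def by (simp add: mult.commute)
    then have "\<phi> (b-1) div d < b-1" by (rule less_mult_imp_div_less)
    moreover have "b - 1 \<le> \<phi> (b-1) div d" using ge[of "b-1"] b1 by simp
    ultimately show False by simp
  qed
qed

lemma upper:
  assumes a3: "a \<ge> 3" and b1: "b \<ge> 1" and cg: "cycle_graph a E"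
  shows "ord_arrows (1 + (a-1)*(b-1)) a E b (mon_path_edges b)"
  unfolding ord_arrows_def
proof (intro allI impI)
  fix c assume tc: "two_coloring (1 + (a-1)*(b-1)) c"
  define n where "n = 1 + (a-1)*(b-1)"
  define d where "d = a - 1"
  have tc': "\<And>x y. x < n \<Longrightarrow> y < n \<Longrightarrow> x \<noteq> y \<Longrightarrow> c {x,y} \<in> {1,2}"
    using tc by (auto simp: two_coloring_def n_def)
  show "incr_embedding (1 + (a-1)*(b-1)) c 1 a E \<or> incr_embedding (1 + (a-1)*(b-1)) c 2 b (mon_path_edges b)"
    unfolding n_def[symmetric]
  proof (rule disjCI)
    assume no2: "\<not> incr_embedding n c 2 b (mon_path_edges b)"
    define P where "P k v \<longleftrightarrow> (\<exists>\<psi>. strict_mono_on {..<k} \<psi> \<and> 1 \<le> k \<and> \<psi> (k-1) = v \<and>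
        (\<forall>i. Suc i < k \<longrightarrow> c {\<psi> i, \<psi> (Suc i)} = 2))" for k v
    have Pb: "k < b" if "P k v" "v < n" for k v
    proof (rule ccontr)
      assume "\<not> k < b"
      then have kb: "b \<le> k" by simp
      from that obtain \<psi> where sm: "strict_mono_on {..<k} \<psi>" and k1: "1 \<le> k" and last: "\<psi> (k-1) = v"
        and col: "\<And>i. Suc i < k \<Longrightarrow> c {\<psi> i, \<psi> (Suc i)} = 2" by (auto simp: P_def)
      have "incr_embedding n c 2 b (mon_path_edges b)"
        unfolding incr_embedding_def
      proof (intro exI conjI allI impI)
        show "strict_mono_on {..<b} \<psi>"
          using sm kb by (auto simp: monotone_on_def)
      next
        fix i assume "i < b"
        then have "\<psi> i \<le> \<psi> (k-1)"
          proof -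
          have "i < k - 1 \<or> i = k - 1" using kb \<open>i < b\<close> by arith
          then show ?thesis using strict_mono_onD[OF sm, of i "k-1"] kb \<open>i < b\<close> by fastforce
        qed
        then show "\<psi> i < n" using last that by simp
      next
        fix u v assume "{u,v} \<in> mon_path_edges b"
        then obtain i where "{u,v} = {i, Suc i}" "Suc i < b" by (auto simp: mon_path_edges_def)
        then show "c {\<psi> u, \<psi> v} = 2" using col[of i] kb
          by (auto simp: doubleton_eq_iff insert_commute)
      qed
      with no2 show False by simp
    qed
    have P1: "P 1 v" for v
      by (auto simp: P_def intro!: exI[of _ "\<lambda>_. v"] simp: monotone_on_def)
    have ext: "P (Suc k) v" if "P k u" "u < v" "c {u,v} = 2" for k u v
    proof -
      from that obtain \<psi> where sm: "strict_mono_on {..<k} \<psi>" and k1: "1 \<le> k" and last: "\<psi> (k-1) = u"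
        and col: "\<And>i. Suc i < k \<Longrightarrow> c {\<psi> i, \<psi> (Suc i)} = 2" by (auto simp: P_def)
      have le: "\<psi> i \<le> u" if "i < k" for i
        proof -
        have "i < k - 1 \<or> i = k - 1" using that by arith
        then show ?thesis using strict_mono_onD[OF sm, of i "k-1"] last that by fastforce
      qed
      show ?thesis unfolding P_def
      proof (intro exI[of _ "\<psi>(k := v)"] conjI allI impI)
        show "strict_mono_on {..<Suc k} (\<psi>(k := v))"
        proof (rule strict_mono_onI)
          fix r s assume "r \<in> {..<Suc k}" "s \<in> {..<Suc k}" "r < s"
          then show "(\<psi>(k := v)) r < (\<psi>(k := v)) s"
            using strict_mono_onD[OF sm, of r s] le[of r] \<open>u < v\<close> by (cases "s = k") auto
        qed
      next
        fix i assume "Suc i < Suc k"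
        then show "c {(\<psi>(k := v)) i, (\<psi>(k := v)) (Suc i)} = 2"
          using col[of i] last that(3) by (cases "Suc i = k") auto
      qed simp_all
    qed
    define L where "L v = Max {k. P k v}" for v
    have fin: "finite {k. P k v}" if "v < n" for v
    proof (rule finite_subset[of _ "{..<b}"])
      show "{k. P k v} \<subseteq> {..<b}"
      proof
        fix k assume "k \<in> {k. P k v}"
        then have "P k v" by simp
        from Pb[OF this that] show "k \<in> {..<b}" by simp
      qed
    qed simp
    have PL: "P (L v) v" and Lb: "L v < b" and L1: "1 \<le> L v" if "v < n" for v
    proof -
      have ne: "{k. P k v} \<noteq> {}" using P1[of v] by blast
      show PLv: "P (L v) v" using Max_in[OF fin[OF that] ne] unfolding L_def by simp
      show "L v < b" by (rule Pb[OF PLv that])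
      have "1 \<in> {k. P k v}" using P1[of v] by simp
      from Max_ge[OF fin[OF that] this] show "1 \<le> L v" unfolding L_def .
    qed
    have Lmono: "L u < L v" if "u < v" "v < n" "c {u,v} = 2" for u v
    proof -
      have un: "u < n" using that by simp
      have "P (Suc (L u)) v" by (rule ext[OF PL[OF un] that(1) that(3)])
      then have "Suc (L u) \<in> {k. P k v}" by simp
      from Max_ge[OF fin[OF that(2)] this] have "Suc (L u) \<le> L v" unfolding L_def .
      then show ?thesis by simp
    qed
    define F where "F t = {v. v < n \<and> L v = t}" for t
    have "\<exists>t. a \<le> card (F t)"
    proof (rule ccontr)
      assume "\<not> ?thesis"
      then have Flt: "card (F t) < a" for t by (simp add: not_le)
      have Fle: "card (F t) \<le> d" for t using Flt[of t] d_def by simp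
      have "{..<n} \<subseteq> (\<Union>t\<in>{1..<b}. F t)" using Lb L1 by (auto simp: F_def)
      then have "card {..<n} \<le> card (\<Union>t\<in>{1..<b}. F t)" by (intro card_mono) (auto simp: F_def)
      also have "\<dots> \<le> (\<Sum>t\<in>{1..<b}. card (F t))" by (rule card_UN_le) simp
      also have "\<dots> \<le> (\<Sum>t\<in>{1..<b}. d)" by (intro sum_mono Fle)
      also have "\<dots> = (b-1) * d" by simp
      finally show False by (simp add: n_def d_def mult.commute)
    qed
    then obtain t where Ft: "a \<le> card (F t)" by blast
    define S where "S = F t"
    have finS: "finite S" by (auto simp: S_def F_def)
    have col1: "c {u,v} = 1" if "u \<in> S" "v \<in> S" "u < v" for u v
    proof -
      have "c {u,v} \<in> {1,2}" using tc' that by (auto simp: S_def F_def)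
      moreover have "c {u,v} \<noteq> 2" using Lmono[of u v] that by (auto simp: S_def F_def)
      ultimately show ?thesis by simp
    qed
    define xs where "xs = sorted_list_of_set S"
    have lxs: "length xs = card S" and sxs: "set xs = S" and srt: "sorted_wrt (<) xs"
      using finS by (simp_all add: xs_def)
    obtain \<sigma> where bij: "bij_betw \<sigma> {..<a} {..<a}" and Ed: "E = {{\<sigma> i, \<sigma> (Suc i mod a)} | i. i < a}"
      using cg by (auto simp: cycle_graph_def)
    have Eprop: "u < a \<and> v < a \<and> u \<noteq> v" if "{u,v} \<in> E" for u v
    proof -
      from that obtain i where i: "i < a" "{u,v} = {\<sigma> i, \<sigma> (Suc i mod a)}" using Ed by auto
      have m: "Suc i mod a < a" using a3 by simp
      have "i \<noteq> Suc i mod a"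
      proof (cases "Suc i < a")
        case True then show ?thesis by simp
      next
        case False then have "Suc i = a" using i(1) by simp
        then show ?thesis using a3 by simp
      qed
      then have "\<sigma> i \<noteq> \<sigma> (Suc i mod a)" using bij i(1) m by (auto simp: bij_betw_def inj_on_def)
      moreover have "\<sigma> i < a" "\<sigma> (Suc i mod a) < a" using bij i(1) m by (auto simp: bij_betw_def)
      ultimately show ?thesis using i(2) by (auto simp: doubleton_eq_iff)
    qed
    show "incr_embedding n c 1 a E"
      unfolding incr_embedding_def
    proof (intro exI[of _ "\<lambda>i. xs ! i"] conjI allI impI)
      show "strict_mono_on {..<a} (\<lambda>i. xs ! i)"
      proof (rule strict_mono_onI)
        fix r s assume "r \<in> {..<a}" "s \<in> {..<a}" "r < s"
        then show "xs ! r < xs ! s" using sorted_wrt_nth_less[OF srt, of r s] lxs Ft S_def by simp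
      qed
    next
      fix i assume "i < a"
      then have "xs ! i \<in> S" using lxs sxs Ft S_def nth_mem by (metis less_le_trans)
      then show "xs ! i < n" by (auto simp: S_def F_def)
    next
      fix u v assume "{u,v} \<in> E"
      from Eprop[OF this] have uv: "u < a" "v < a" "u \<noteq> v" by auto
      have inS: "xs ! u \<in> S" "xs ! v \<in> S" using uv lxs sxs Ft S_def nth_mem by (metis less_le_trans)+
      show "c {xs ! u, xs ! v} = 1"
      proof (cases "u < v")
        case True
        then have "xs ! u < xs ! v" using sorted_wrt_nth_less[OF srt] lxs Ft uv S_def by simp
        then show ?thesis using col1 inS by simp
      next
        case False
        then have "v < u" using uv by simp
        then have "xs ! v < xs ! u" using sorted_wrt_nth_less[OF srt] lxs Ft uv S_def by simp
        then show ?thesis using col1[OF inS(2) inS(1)] by (simp add: insert_commute)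
      qed
    qed
  qed
qed

theorem corollary4p3:
  fixes a b :: nat and E :: "nat set set"
  assumes "a \<ge> 3" and "b \<ge> 1" and "cycle_graph a E"
  shows "R_ord a E b (mon_path_edges b) = 1 + (a - 1) * (b - 1)"
  unfolding R_ord_def
proof (rule Least_equality)
  show "ord_arrows (1 + (a - 1) * (b - 1)) a E b (mon_path_edges b)"
    using upper assms by blast
next
  fix y assume "ord_arrows y a E b (mon_path_edges b)"
  then show "1 + (a - 1) * (b - 1) \<le> y"
    using lower[OF assms, of y] by linarith
qed

end
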